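(* Let $\pi$ be drawn uniformly at random among all permutations of $[n]$, independently of $\mathbf v\sim\mathcal F$. For every agent $i\in[n]$, every price $p>0$, and every $\alpha>0$, \[ \mathbb{E}_{\mathbf v,\pi}\Big[\min\Big\{\alpha,\sum_{j\in B_\pi(i)}y^*_j(v_j,p)\Big\}\Big]\ \le\ \max\{\alpha,1/2\}\;\mathbb{E}_{\mathbf v,\pi}\Big[\sum_{j\in[n]}y_j(\mathbf v,p,\pi)\Big]. \]
   Context: There are $n$ agents $[n]$ and one divisible item of size $1$. Each agent $i$ has a non-decreasing concave valuation $v_i:[0,1]\to\mathbb{R}_{\ge0}$ drawn independently from a known distribution $\mathcal F_i$; $\mathbf v\sim\mathcal F=\mathcal F_1\times\cdots\times\mathcal F_n$. For a price $p>0$, $y^*_i(v_i,p)\in[0,1]$ denotes a maximizer of $z\mapsto v_i(z)-pz$ over $[0,1]$ (fixed measurable selection). For an ordering $\pi$ of $[n]$, $B_\pi(i)$ is the set of agents acting before $i$ in $\pi$, and $y_i(\mathbf v,p,\pi)=\min\{y^*_i(v_i,p),\max\{0,1-\sum_{j\in B_\pi(i)}y^*_j(v_j,p)\}\}$ is the fraction agent $i$ buys in sequential posted pricing at price $p$ per unit in order $\pi$; in particular $\sum_j y_j(\mathbf v,p,\pi)=\min\{1,\sum_j y^*_j(v_j,p)\}$. *)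

theory Defs
  imports "HOL-Probability.Probability"
begin

text \<open>A valuation: non-decreasing, concave, non-negative function on [0,1]
  (represented as a function real to real, only its values on [0,1] matter).\<close>
definition valuation :: "(real \<Rightarrow> real) \<Rightarrow> bool" where
  "valuation v \<longleftrightarrow> (\<forall>z\<in>{0..1}. v z \<ge> 0) \<and> mono_on {0..1} v \<and> concave_on {0..1} v"

text \<open>Orderings of the agents {..<n}: a bijection sigma, sigma j = position of j.\<close>
definition orderings :: "nat \<Rightarrow> (nat \<Rightarrow> nat) set" where
  "orderings n = {\<sigma>. \<sigma> permutes {..<n}}"

definition before :: "nat \<Rightarrow> (nat \<Rightarrow> nat) \<Rightarrow> nat \<Rightarrow> nat set" where
  "before n \<sigma> i = {j \<in> {..<n}. \<sigma> j < \<sigma> i}"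

definition buy :: "((real \<Rightarrow> real) \<Rightarrow> real \<Rightarrow> real) \<Rightarrow> nat \<Rightarrow> (nat \<Rightarrow> real \<Rightarrow> real)
    \<Rightarrow> real \<Rightarrow> (nat \<Rightarrow> nat) \<Rightarrow> nat \<Rightarrow> real" where
  "buy ystar n v p \<sigma> i =
     min (ystar (v i) p) (max 0 (1 - (\<Sum>j\<in>before n \<sigma> i. ystar (v j) p)))"

end

theory Submission imports Defs begin
lemma prefix_buy:
  fixes x :: "nat \<Rightarrow> real"
  assumes \<sigma>: "\<sigma> permutes {..<n}" and x: "\<And>j. j < n \<Longrightarrow> x j \<ge> 0" and k: "k \<le> n"
  shows "(\<Sum>j\<in>{j. j < n \<and> \<sigma> j < k}. min (x j) (max 0 (1 - (\<Sum>l\<in>before n \<sigma> j. x l))))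
         = min 1 (\<Sum>j\<in>{j. j < n \<and> \<sigma> j < k}. x j)"
  using k
proof (induction k)
  case 0
  then show ?case by simp
next
  case (Suc k)
  define l0 where "l0 = inv \<sigma> k"
  have kn: "k < n" using Suc by simp
  have l0n: "l0 < n" using permutes_in_image[OF permutes_inv[OF \<sigma>], of k] kn l0_def by auto
  have sl0: "\<sigma> l0 = k" using permutes_inverses(1)[OF \<sigma>] l0_def by simp
  have sset: "{j. j < n \<and> \<sigma> j < Suc k} = insert l0 {j. j < n \<and> \<sigma> j < k}"
  proof (rule set_eqI, rule iffI)
    fix j assume "j \<in> {j. j < n \<and> \<sigma> j < Suc k}"
    then have "j < n" "\<sigma> j < k \<or> \<sigma> j = k" by auto
    moreover have "\<sigma> j = k \<Longrightarrow> j = l0" using sl0 permutes_inj[OF \<sigma>] by (metis injD)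
    ultimately show "j \<in> insert l0 {j. j < n \<and> \<sigma> j < k}" by auto
  qed (use sl0 l0n in auto)
  have nin: "l0 \<notin> {j. j < n \<and> \<sigma> j < k}" using sl0 by simp
  have bef: "before n \<sigma> l0 = {j. j < n \<and> \<sigma> j < k}" unfolding before_def using sl0 by auto
  have fin: "finite {j. j < n \<and> \<sigma> j < k}" by simp
  have X0: "(\<Sum>j\<in>{j. j < n \<and> \<sigma> j < k}. x j) \<ge> 0" by (rule sum_nonneg) (use x in auto)
  have x0: "x l0 \<ge> 0" using x l0n by simp
  show ?case
    unfolding sset sum.insert[OF fin nin] using Suc.IH Suc.prems X0 x0 bef
    by (auto simp: min_def max_def)
qed

lemma total_buy:
  fixes x :: "nat \<Rightarrow> real"
  assumes \<sigma>: "\<sigma> permutes {..<n}" and x: "\<And>j. j < n \<Longrightarrow> x j \<ge> 0"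
  shows "(\<Sum>j<n. min (x j) (max 0 (1 - (\<Sum>l\<in>before n \<sigma> j. x l)))) = min 1 (\<Sum>j<n. x j)"
proof -
  have "{j. j < n \<and> \<sigma> j < n} = {..<n}"
    using permutes_in_image[OF \<sigma>] by auto
  then show ?thesis using prefix_buy[OF \<sigma> x, where k=n] by simp
qed

definition rv :: "nat \<Rightarrow> nat \<Rightarrow> nat" where
  "rv n k = (if k < n then n - 1 - k else k)"

lemma rv_permutes: "rv n permutes {..<n}"
proof (rule bij_imp_permutes)
  show "bij_betw (rv n) {..<n} {..<n}"
    by (rule bij_betw_byWitness[where f' = "rv n"]) (auto simp: rv_def)
qed (auto simp: rv_def)

lemma rv_rv: "rv n (rv n k) = k" by (auto simp: rv_def)

lemma before_rv:
  assumes \<sigma>: "\<sigma> permutes {..<n}" and i: "i < n"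
  shows "before n (rv n \<circ> \<sigma>) i = {j. j < n \<and> \<sigma> i < \<sigma> j}"
proof -
  have b: "\<And>j. j < n \<Longrightarrow> \<sigma> j < n" using permutes_in_image[OF \<sigma>] by auto
  have ar: "\<And>a b. a < n \<Longrightarrow> b < n \<Longrightarrow> (n - 1 - a < n - 1 - b) = (b < a)" by linarith
  show ?thesis
  proof (rule set_eqI)
    fix j
    show "j \<in> before n (rv n \<circ> \<sigma>) i \<longleftrightarrow> j \<in> {j. j < n \<and> \<sigma> i < \<sigma> j}"
      using b[of j] b[OF i] ar[OF b[of j] b[OF i]] i unfolding before_def rv_def by auto
  qed
qed

lemma pointwise_ineq:
  fixes a b1 b2 S G c :: real
  assumes "a > 0" "b1 \<ge> 0" "b2 \<ge> 0" "b1 + b2 \<le> S" "G = min 1 S"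
  shows "min a b1 + min a b2 \<le> 2 * (max a (1/2) * G)"
proof (cases "S \<le> 1")
  case True
  have "max a (1/2) * S \<ge> 1/2 * S" using assms by (intro mult_right_mono) auto
  then show ?thesis using True assms by (auto simp: min_def)
next
  case False
  have "min a b1 + min a b2 \<le> 2 * a" by auto
  then show ?thesis using False assms by (auto simp: min_def max_def)
qed


theorem mainTheorem3:
  fixes n :: nat
    and Mv :: "(real \<Rightarrow> real) measure"
    and F :: "nat \<Rightarrow> (real \<Rightarrow> real) measure"
    and ystar :: "(real \<Rightarrow> real) \<Rightarrow> real \<Rightarrow> real"
    and i :: nat and p \<alpha> :: real
  assumes val: "\<And>v. v \<in> space Mv \<Longrightarrow> valuation v"
    and F_sets: "\<And>j. j < n \<Longrightarrow> sets (F j) = sets Mv"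
    and F_prob: "\<And>j. j < n \<Longrightarrow> prob_space (F j)"
    and ystar_range: "\<And>v q. v \<in> space Mv \<Longrightarrow> q > 0 \<Longrightarrow> ystar v q \<in> {0..1}"
    and ystar_max: "\<And>v q z. v \<in> space Mv \<Longrightarrow> q > 0 \<Longrightarrow> z \<in> {0..1} \<Longrightarrow>
                      v z - q * z \<le> v (ystar v q) - q * ystar v q"
    and ystar_meas: "\<And>q. q > 0 \<Longrightarrow> (\<lambda>v. ystar v q) \<in> borel_measurable Mv"
    and i: "i < n" and p: "p > 0" and \<alpha>: "\<alpha> > 0"
  shows "(\<integral>(v, \<sigma>). min \<alpha> (\<Sum>j\<in>before n \<sigma> i. ystar (v j) p)
            \<partial>(PiM {..<n} F \<Otimes>\<^sub>M measure_pmf (pmf_of_set (orderings n))))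
         \<le> max \<alpha> (1/2) *
           (\<integral>(v, \<sigma>). (\<Sum>j\<in>{..<n}. buy ystar n v p \<sigma> j)
            \<partial>(PiM {..<n} F \<Otimes>\<^sub>M measure_pmf (pmf_of_set (orderings n))))"
proof -
  define M where "M = PiM {..<n} F"
  define Ords where "Ords = orderings n"
  define N where "N = measure_pmf (pmf_of_set Ords)"
  define c where "c = max \<alpha> (1/2)"
  define f where "f = (\<lambda>(v::nat \<Rightarrow> real \<Rightarrow> real, \<sigma>::nat \<Rightarrow> nat). min \<alpha> (\<Sum>j\<in>before n \<sigma> i. ystar (v j) p))"
  define g where "g = (\<lambda>(v::nat \<Rightarrow> real \<Rightarrow> real, \<sigma>::nat \<Rightarrow> nat). (\<Sum>j\<in>{..<n}. buy ystar n v p \<sigma> j))"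
  have Ofin: "finite Ords" unfolding Ords_def orderings_def by (rule finite_permutations) simp
  have One: "Ords \<noteq> {}" unfolding Ords_def orderings_def using permutes_id by blast
  have probM: "prob_space M" unfolding M_def by (rule prob_space_PiM) (use F_prob in auto)
  have probN: "prob_space N" unfolding N_def by (rule prob_space_measure_pmf)
  interpret MM: prob_space M by (rule probM)
  interpret NN: prob_space N by (rule probN)
  interpret P: pair_prob_space M N ..
  have fm: "finite_measure (M \<Otimes>\<^sub>M N)"
    using prob_space_pair[OF probM probN] by (rule prob_space.finite_measure)
  have spc: "\<And>v j. v \<in> space M \<Longrightarrow> j < n \<Longrightarrow> v j \<in> space Mv"
  proof -
    fix v j assume "v \<in> space M" "j < n"
    then have "v j \<in> space (F j)" unfolding M_def space_PiM by auto
    then show "v j \<in> space Mv" using sets_eq_imp_space_eq[OF F_sets[OF \<open>j < n\<close>]] by simp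
  qed
  have xr: "\<And>v j. v \<in> space M \<Longrightarrow> j < n \<Longrightarrow> ystar (v j) p \<in> {0..1}"
    using spc ystar_range p by blast
  have xmeas: "\<And>j. j < n \<Longrightarrow> (\<lambda>z. ystar (fst z j) p) \<in> borel_measurable (M \<Otimes>\<^sub>M N)"
  proof -
    fix j assume j: "j < n"
    have "(\<lambda>v. ystar v p) \<in> borel_measurable (F j)"
      using ystar_meas[OF p] measurable_cong_sets[OF F_sets[OF j] refl] by blast
    moreover have "(\<lambda>v. v j) \<in> M \<rightarrow>\<^sub>M F j" unfolding M_def
      by (rule measurable_component_singleton) (use j in simp)
    ultimately have "(\<lambda>v. ystar (v j) p) \<in> borel_measurable M" by (rule measurable_compose[rotated])
    then show "(\<lambda>z. ystar (fst z j) p) \<in> borel_measurable (M \<Otimes>\<^sub>M N)"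
      by (rule measurable_compose[OF measurable_fst])
  qed
  have sumk: "\<And>k. k \<in> Pow {..<n} \<Longrightarrow> (\<lambda>z. (\<Sum>j\<in>k. ystar (fst z j) p)) \<in> borel_measurable (M \<Otimes>\<^sub>M N)"
    using xmeas by (intro borel_measurable_sum) auto
  have befmeas: "\<And>j. (\<lambda>z. before n (snd z) j) \<in> measurable (M \<Otimes>\<^sub>M N) (count_space (Pow {..<n}))"
  proof -
    fix j
    have "(\<lambda>\<sigma>. before n \<sigma> j) \<in> measurable N (count_space (Pow {..<n}))"
      unfolding N_def by (auto simp: before_def)
    then show "(\<lambda>z. before n (snd z) j) \<in> measurable (M \<Otimes>\<^sub>M N) (count_space (Pow {..<n}))"
      by (rule measurable_compose[OF measurable_snd])
  qed
  have fmeas: "f \<in> borel_measurable (M \<Otimes>\<^sub>M N)"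
  proof -
    have "(\<lambda>z. (\<lambda>k z. min \<alpha> (\<Sum>j\<in>k. ystar (fst z j) p)) (before n (snd z) i) z) \<in> borel_measurable (M \<Otimes>\<^sub>M N)"
      by (rule measurable_compose_countable'[OF _ befmeas]) (use sumk in \<open>auto intro: countable_finite\<close>)
    then show ?thesis unfolding f_def by (simp add: case_prod_beta')
  qed
  have gmeas: "g \<in> borel_measurable (M \<Otimes>\<^sub>M N)"
  proof -
    have "(\<lambda>z. \<Sum>j\<in>{..<n}. (\<lambda>k z. min (ystar (fst z j) p) (max 0 (1 - (\<Sum>l\<in>k. ystar (fst z l) p)))) (before n (snd z) j) z) \<in> borel_measurable (M \<Otimes>\<^sub>M N)"
    proof (rule borel_measurable_sum)
      fix j assume j: "j \<in> {..<n}"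
      show "(\<lambda>z. (\<lambda>k z. min (ystar (fst z j) p) (max 0 (1 - (\<Sum>l\<in>k. ystar (fst z l) p)))) (before n (snd z) j) z) \<in> borel_measurable (M \<Otimes>\<^sub>M N)"
        by (rule measurable_compose_countable'[OF _ befmeas]) (use sumk xmeas j in \<open>auto intro: countable_finite\<close>)
    qed
    then show ?thesis unfolding g_def buy_def by (simp add: case_prod_beta')
  qed
  have fint: "integrable (M \<Otimes>\<^sub>M N) f"
  proof (rule finite_measure.integrable_const_bound[OF fm, where B=\<alpha>])
    show "AE z in M \<Otimes>\<^sub>M N. norm (f z) \<le> \<alpha>"
    proof (rule AE_I2)
      fix z assume z: "z \<in> space (M \<Otimes>\<^sub>M N)"
      then have "fst z \<in> space M" by (auto simp: space_pair_measure)
      then have "(\<Sum>j\<in>before n (snd z) i. ystar (fst z j) p) \<ge> 0"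
        using xr by (intro sum_nonneg) (auto simp: before_def)
      then show "norm (f z) \<le> \<alpha>" unfolding f_def using \<alpha> by (auto simp: case_prod_beta')
    qed
  qed (rule fmeas)
  have gint: "integrable (M \<Otimes>\<^sub>M N) g"
  proof (rule finite_measure.integrable_const_bound[OF fm, where B="real n"])
    show "AE z in M \<Otimes>\<^sub>M N. norm (g z) \<le> real n"
    proof (rule AE_I2)
      fix z assume z: "z \<in> space (M \<Otimes>\<^sub>M N)"
      then have v: "fst z \<in> space M" by (auto simp: space_pair_measure)
      have "norm (g z) \<le> (\<Sum>j\<in>{..<n}. norm (buy ystar n (fst z) p (snd z) j))"
        unfolding g_def by (simp add: case_prod_beta' sum_norm_le)
      also have "\<dots> \<le> (\<Sum>j\<in>{..<n}. 1)"
      proof (rule sum_mono)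
        fix j assume "j \<in> {..<n}"
        then have "ystar (fst z j) p \<in> {0..1}" using xr v by auto
        then show "norm (buy ystar n (fst z) p (snd z) j) \<le> 1" unfolding buy_def by auto
      qed
      finally show "norm (g z) \<le> real n" by simp
    qed
  qed (rule gmeas)
  have eqf: "integral\<^sup>L (M \<Otimes>\<^sub>M N) f = (\<integral>v. (\<integral>\<sigma>. f (v, \<sigma>) \<partial>N) \<partial>M)"
    using P.integral_fst'[OF fint] by simp
  have eqg: "integral\<^sup>L (M \<Otimes>\<^sub>M N) g = (\<integral>v. (\<integral>\<sigma>. g (v, \<sigma>) \<partial>N) \<partial>M)"
    using P.integral_fst'[OF gint] by simp
  have key: "(\<integral>\<sigma>. f (v, \<sigma>) \<partial>N) \<le> c * (\<integral>\<sigma>. g (v, \<sigma>) \<partial>N)" if v: "v \<in> space M" for v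
  proof -
    let ?x = "\<lambda>j. ystar (v j) p"
    let ?S = "\<Sum>j<n. ?x j"
    have x0: "\<And>j. j < n \<Longrightarrow> ?x j \<ge> 0" using xr v by auto
    have gv: "\<And>\<sigma>. \<sigma> \<in> Ords \<Longrightarrow> g (v, \<sigma>) = min 1 ?S"
      unfolding g_def buy_def Ords_def orderings_def using total_buy x0 by (simp add: lessThan_def)
    have rvO: "\<And>\<sigma>. \<sigma> \<in> Ords \<Longrightarrow> rv n \<circ> \<sigma> \<in> Ords"
      unfolding Ords_def orderings_def using rv_permutes permutes_compose by blast
    have reidx: "(\<Sum>\<sigma>\<in>Ords. f (v, rv n \<circ> \<sigma>)) = (\<Sum>\<sigma>\<in>Ords. f (v, \<sigma>))"
      by (rule sum.reindex_bij_witness[where i="\<lambda>\<sigma>. rv n \<circ> \<sigma>" and j="\<lambda>\<sigma>. rv n \<circ> \<sigma>"])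
         (auto intro: rvO simp: fun_eq_iff rv_rv)
    have pw: "f (v, \<sigma>) + f (v, rv n \<circ> \<sigma>) \<le> 2 * (c * g (v, \<sigma>))" if s: "\<sigma> \<in> Ords" for \<sigma>
    proof -
      have sp: "\<sigma> permutes {..<n}" using s unfolding Ords_def orderings_def by simp
      have A: "before n \<sigma> i \<subseteq> {..<n}" "{j. j < n \<and> \<sigma> i < \<sigma> j} \<subseteq> {..<n}" by (auto simp: before_def)
      have disj: "before n \<sigma> i \<inter> {j. j < n \<and> \<sigma> i < \<sigma> j} = {}" by (auto simp: before_def)
      have "(\<Sum>j\<in>before n \<sigma> i. ?x j) + (\<Sum>j\<in>{j. j < n \<and> \<sigma> i < \<sigma> j}. ?x j)
            = (\<Sum>j\<in>before n \<sigma> i \<union> {j. j < n \<and> \<sigma> i < \<sigma> j}. ?x j)"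
        by (rule sum.union_disjoint[symmetric]) (use disj in \<open>auto simp: before_def\<close>)
      also have "\<dots> \<le> ?S" by (rule sum_mono2) (use A x0 in auto)
      finally have le: "(\<Sum>j\<in>before n \<sigma> i. ?x j) + (\<Sum>j\<in>{j. j < n \<and> \<sigma> i < \<sigma> j}. ?x j) \<le> ?S" .
      have b1: "(\<Sum>j\<in>before n \<sigma> i. ?x j) \<ge> 0" by (rule sum_nonneg) (use x0 in \<open>auto simp: before_def\<close>)
      have b2: "(\<Sum>j\<in>{j. j < n \<and> \<sigma> i < \<sigma> j}. ?x j) \<ge> 0" by (rule sum_nonneg) (use x0 in auto)
      show ?thesis
        unfolding f_def c_def using before_rv[OF sp i] pointwise_ineq[OF \<alpha> b1 b2 le gv[OF s]] by simp
    qed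
    have "2 * (\<Sum>\<sigma>\<in>Ords. f (v, \<sigma>)) = (\<Sum>\<sigma>\<in>Ords. f (v, \<sigma>) + f (v, rv n \<circ> \<sigma>))"
      using reidx by (simp add: sum.distrib)
    also have "\<dots> \<le> (\<Sum>\<sigma>\<in>Ords. 2 * (c * g (v, \<sigma>)))" by (rule sum_mono) (rule pw)
    also have "\<dots> = 2 * (c * (\<Sum>\<sigma>\<in>Ords. g (v, \<sigma>)))" by (simp add: sum_distrib_left)
    finally have "(\<Sum>\<sigma>\<in>Ords. f (v, \<sigma>)) \<le> c * (\<Sum>\<sigma>\<in>Ords. g (v, \<sigma>))" by simp
    then have "(\<Sum>\<sigma>\<in>Ords. f (v, \<sigma>)) / card Ords \<le> c * (\<Sum>\<sigma>\<in>Ords. g (v, \<sigma>)) / card Ords"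
      by (rule divide_right_mono) simp
    then show ?thesis unfolding N_def using integral_pmf_of_set[OF One Ofin] by simp
  qed
  have "integral\<^sup>L (M \<Otimes>\<^sub>M N) f \<le> (\<integral>v. c * (\<integral>\<sigma>. g (v, \<sigma>) \<partial>N) \<partial>M)"
    unfolding eqf
    by (rule integral_mono[OF P.integrable_fst'[OF fint]])
       (use P.integrable_fst'[OF gint] key in auto)
  also have "\<dots> = c * integral\<^sup>L (M \<Otimes>\<^sub>M N) g" unfolding eqg by simp
  finally show ?thesis unfolding f_def g_def M_def N_def Ords_def c_def .
qed
end
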